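(* Let $k$ be an integer such that either $k\ge 10$ and $k$ is even, or $k\equiv 0 \pmod 4$. Then $\chi_\rho(S^2_{C_k})=4$.
   Context: $C_k$ is the cycle with vertex set $[k]=\{0,\dots,k-1\}$ and edges $\{i,i+1\}$ (indices mod $k$). For a graph $G$ with vertex set $[k]$ and $n\ge 1$, the generalized Sierpi\'nski graph $S^n_G$ has vertex set $[k]^n$, and $u=u_1\cdots u_n$, $v=v_1\cdots v_n$ are adjacent iff there is $i$ with: $u_j=v_j$ for $j<i$; $u_i\neq v_i$ and $u_iv_i\in E(G)$; and $u_j=v_i$, $v_j=u_i$ for all $j>i$. A packing $c$-coloring of a graph $X$ is a map $f:V(X)\to\{1,\dots,c\}$ such that any two distinct vertices $u,v$ with $f(u)=f(v)=i$ satisfy $d_X(u,v)>i$; the packing chromatic number $\chi_\rho(X)$ is the least such $c$. *)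

theory Defs
  imports Main "HOL-Library.Extended_Nat"
begin

definition cycle_adj :: "nat \<Rightarrow> nat \<Rightarrow> nat \<Rightarrow> bool" where
  "cycle_adj k i j \<longleftrightarrow> i < k \<and> j < k \<and> i \<noteq> j \<and> (j = (i + 1) mod k \<or> i = (j + 1) mod k)"

text \<open>Generalized Sierpinski graph S^n_G for G on [k]; vertices are words of length n
  (lists, u ! 0 = u_1).\<close>
definition sierpinski_V :: "nat \<Rightarrow> nat \<Rightarrow> nat list set" where
  "sierpinski_V k n = {u. length u = n \<and> set u \<subseteq> {..<k}}"

definition sierpinski_adj :: "(nat \<Rightarrow> nat \<Rightarrow> bool) \<Rightarrow> nat list \<Rightarrow> nat list \<Rightarrow> bool" where
  "sierpinski_adj G u v \<longleftrightarrow> length u = length v \<and>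
     (\<exists>i < length u. (\<forall>j < i. u ! j = v ! j) \<and> u ! i \<noteq> v ! i \<and> G (u ! i) (v ! i) \<and>
        (\<forall>j. i < j \<and> j < length u \<longrightarrow> u ! j = v ! i \<and> v ! j = u ! i))"

definition walk :: "'a set \<Rightarrow> ('a \<Rightarrow> 'a \<Rightarrow> bool) \<Rightarrow> 'a list \<Rightarrow> bool" where
  "walk V E p \<longleftrightarrow> p \<noteq> [] \<and> set p \<subseteq> V \<and> (\<forall>i. Suc i < length p \<longrightarrow> E (p ! i) (p ! Suc i))"

text \<open>Graph distance (infinity if no walk exists).\<close>
definition gdist :: "'a set \<Rightarrow> ('a \<Rightarrow> 'a \<Rightarrow> bool) \<Rightarrow> 'a \<Rightarrow> 'a \<Rightarrow> enat" where
  "gdist V E u v = (INF p \<in> {p. walk V E p \<and> hd p = u \<and> last p = v}. enat (length p - 1))"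

definition packing_coloring :: "'a set \<Rightarrow> ('a \<Rightarrow> 'a \<Rightarrow> bool) \<Rightarrow> nat \<Rightarrow> ('a \<Rightarrow> nat) \<Rightarrow> bool" where
  "packing_coloring V E c f \<longleftrightarrow> (\<forall>v \<in> V. f v \<in> {1..c}) \<and>
     (\<forall>u \<in> V. \<forall>v \<in> V. u \<noteq> v \<and> f u = f v \<longrightarrow> gdist V E u v > enat (f u))"

definition packing_chromatic_number :: "'a set \<Rightarrow> ('a \<Rightarrow> 'a \<Rightarrow> bool) \<Rightarrow> nat" where
  "packing_chromatic_number V E = (LEAST c. \<exists>f. packing_coloring V E c f)"

end

theory Submission
  imports Defs
begin


definition sc :: "nat \<Rightarrow> nat \<Rightarrow> nat" where "sc k x = (if Suc x = k then 0 else Suc x)"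
definition pc :: "nat \<Rightarrow> nat \<Rightarrow> nat" where "pc k x = (if x = 0 then k - 1 else x - 1)"
definition cd :: "nat \<Rightarrow> nat \<Rightarrow> nat \<Rightarrow> nat" where
  "cd k x y = (if x \<le> y then min (y-x) (k-(y-x)) else min (x-y) (k-(x-y)))"

lemma sc_lt: "x < k \<Longrightarrow> sc k x < k" unfolding sc_def by auto
lemma pc_lt: "x < k \<Longrightarrow> pc k x < k" unfolding pc_def by auto
lemma pc_sc: "x < k \<Longrightarrow> pc k (sc k x) = x" unfolding sc_def pc_def by auto
lemma sc_pc: "x < k \<Longrightarrow> sc k (pc k x) = x" unfolding sc_def pc_def by auto
lemma cd_self: "cd k x x = 0" unfolding cd_def by auto
lemma cd_sym: "cd k x y = cd k y x" unfolding cd_def by auto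
definition DD :: "nat \<Rightarrow> nat \<Rightarrow> nat" where "DD x y = (if x \<le> y then y - x else x - y)"
lemma cd_DD: "cd k x y = min (DD x y) (k - DD x y)" unfolding cd_def DD_def by auto
lemma cd_tri: "x < k \<Longrightarrow> y < k \<Longrightarrow> z < k \<Longrightarrow> cd k x z \<le> cd k x y + cd k y z"
proof -
  assume h: "x < k" "y < k" "z < k"
  have t1: "DD x z \<le> DD x y + DD y z" "DD y z \<le> DD x y + DD x z" "DD x y \<le> DD x z + DD y z"
    "DD x y + DD y z + DD x z \<le> 2 * k" "DD x y < k" "DD y z < k" "DD x z < k"
    using h unfolding DD_def by auto
  have "cd k x y = DD x y \<or> cd k x y = k - DD x y" "cd k y z = DD y z \<or> cd k y z = k - DD y z"
    "cd k x z \<le> DD x z" "cd k x z \<le> k - DD x z" unfolding cd_DD by auto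
  then show ?thesis using t1 by linarith
qed
lemma cd_sc: "x < k \<Longrightarrow> cd k x (sc k x) \<le> 1" unfolding cd_def sc_def by (auto simp: min_def)
lemma cd_pc: "x < k \<Longrightarrow> cd k x (pc k x) \<le> 1" unfolding cd_def pc_def by (auto simp: min_def)
lemma cd_sc2: "4 \<le> k \<Longrightarrow> x < k \<Longrightarrow> cd k x (sc k (sc k x)) = 2" unfolding cd_def sc_def by (auto simp: min_def)
lemma cd_pc2: "4 \<le> k \<Longrightarrow> x < k \<Longrightarrow> cd k x (pc k (pc k x)) = 2" unfolding cd_def pc_def by (auto simp: min_def)
lemma cd_pos: "x < k \<Longrightarrow> y < k \<Longrightarrow> x \<noteq> y \<Longrightarrow> cd k x y \<ge> 1" unfolding cd_def by (auto simp: min_def)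
lemma sc_ne: "2 \<le> k \<Longrightarrow> x < k \<Longrightarrow> sc k x \<noteq> x" unfolding sc_def by auto
lemma pc_ne: "2 \<le> k \<Longrightarrow> x < k \<Longrightarrow> pc k x \<noteq> x" unfolding pc_def by auto

lemma mod_sc: "x < k \<Longrightarrow> (x + 1) mod k = sc k x"
  unfolding sc_def by auto
lemma cycle_adj_iff: "cycle_adj k x y \<longleftrightarrow> x < k \<and> y < k \<and> x \<noteq> y \<and> (y = sc k x \<or> y = pc k x)"
proof
  assume h: "cycle_adj k x y"
  then have xy: "x < k" "y < k" "x \<noteq> y" "y = sc k x \<or> x = sc k y" unfolding cycle_adj_def using mod_sc by auto
  then have "y = sc k x \<or> y = pc k x" using pc_sc[of y k] by auto
  then show "x < k \<and> y < k \<and> x \<noteq> y \<and> (y = sc k x \<or> y = pc k x)" using xy by auto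
next
  assume h: "x < k \<and> y < k \<and> x \<noteq> y \<and> (y = sc k x \<or> y = pc k x)"
  then have "y = sc k x \<or> x = sc k y" using sc_pc[of x k] by auto
  then show "cycle_adj k x y" unfolding cycle_adj_def using mod_sc h by auto
qed

lemma V2: "u \<in> sierpinski_V k 2 \<longleftrightarrow> (\<exists>a b. u = [a, b] \<and> a < k \<and> b < k)"
proof
  assume "u \<in> sierpinski_V k 2"
  then have "length u = 2" "set u \<subseteq> {..<k}" unfolding sierpinski_V_def by auto
  then obtain a b where "u = [a,b]"
    by (metis One_nat_def Suc_1 length_0_conv length_Suc_conv)
  then show "\<exists>a b. u = [a, b] \<and> a < k \<and> b < k" using \<open>set u \<subseteq> {..<k}\<close> by auto
next
  assume "\<exists>a b. u = [a, b] \<and> a < k \<and> b < k"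
  then show "u \<in> sierpinski_V k 2" unfolding sierpinski_V_def by auto
qed

lemma adj2: "sierpinski_adj G [a, b] [a', b'] \<longleftrightarrow> (a = a' \<and> b \<noteq> b' \<and> G b b') \<or> (a \<noteq> a' \<and> G a a' \<and> b = a' \<and> b' = a)"
proof
  assume "sierpinski_adj G [a, b] [a', b']"
  then have "\<exists>i < length [a,b]. (\<forall>j<i. [a,b]!j = [a',b']!j) \<and> [a,b]!i \<noteq> [a',b']!i \<and> G ([a,b]!i) ([a',b']!i) \<and>
      (\<forall>j. i < j \<and> j < length [a,b] \<longrightarrow> [a,b]!j = [a',b']!i \<and> [a',b']!j = [a,b]!i)"
    unfolding sierpinski_adj_def by blast
  then obtain i where i: "i < length [a,b]" "\<forall>j<i. [a,b]!j = [a',b']!j" "[a,b]!i \<noteq> [a',b']!i" "G ([a,b]!i) ([a',b']!i)"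
      "\<forall>j. i < j \<and> j < length [a,b] \<longrightarrow> [a,b]!j = [a',b']!i \<and> [a',b']!j = [a,b]!i"
    by blast
  show "(a = a' \<and> b \<noteq> b' \<and> G b b') \<or> (a \<noteq> a' \<and> G a a' \<and> b = a' \<and> b' = a)"
  proof (cases "i = 0")
    case True
    have "[a,b]!1 = [a',b']!i \<and> [a',b']!1 = [a,b]!i" using i(5) True by auto
    then show ?thesis using i(3,4) True by auto
  next
    case False
    then have "i = 1" using i(1) by auto
    then show ?thesis using i(2) i(3,4) by auto
  qed
next
  assume h: "(a = a' \<and> b \<noteq> b' \<and> G b b') \<or> (a \<noteq> a' \<and> G a a' \<and> b = a' \<and> b' = a)"
  show "sierpinski_adj G [a, b] [a', b']"
  proof (cases "a = a' \<and> b \<noteq> b' \<and> G b b'")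
    case True
    then show ?thesis unfolding sierpinski_adj_def
      by (intro conjI exI[of _ 1]) (auto simp: less_2_cases_iff)
  next
    case False
    then have "a \<noteq> a' \<and> G a a' \<and> b = a' \<and> b' = a" using h by auto
    then show ?thesis unfolding sierpinski_adj_def
      by (intro conjI exI[of _ 0]) (auto simp: less_2_cases_iff)
  qed
qed


definition TT :: "nat \<Rightarrow> nat \<Rightarrow> nat \<Rightarrow> nat \<Rightarrow> nat \<Rightarrow> nat" where
"TT k a b a' b' = min 5 (min (if a' = a then cd k b b' else 5)
   (min (if a' = sc k a \<or> a' = pc k a then cd k b a' + 1 + cd k a b' else 5)
   (min (if a' = sc k (sc k a) then cd k b (sc k a) + 4 + cd k (sc k a) b' else 5)
        (if a' = pc k (pc k a) then cd k b (pc k a) + 4 + cd k (pc k a) b' else 5))))"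

lemma TT_le5: "TT k a b a' b' \<le> 5" unfolding TT_def by (rule min.cobounded1)
lemma TT_R0: "a' = a \<Longrightarrow> TT k a b a' b' \<le> cd k b b'" unfolding TT_def min_le_iff_disj by (simp split del: if_split)
lemma TT_R1: "a' = sc k a \<or> a' = pc k a \<Longrightarrow> TT k a b a' b' \<le> cd k b a' + 1 + cd k a b'" unfolding TT_def min_le_iff_disj by (simp split del: if_split)
lemma TT_R2: "a' = sc k (sc k a) \<Longrightarrow> TT k a b a' b' \<le> cd k b (sc k a) + 4 + cd k (sc k a) b'" unfolding TT_def min_le_iff_disj by (simp split del: if_split)
lemma TT_R2': "a' = pc k (pc k a) \<Longrightarrow> TT k a b a' b' \<le> cd k b (pc k a) + 4 + cd k (pc k a) b'" unfolding TT_def min_le_iff_disj by (simp split del: if_split)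
lemma TT_self: "TT k a b a b = 0" using TT_R0[of a a k b b] by (simp add: cd_self)

lemma TT_gt:
  assumes "c < 5"
    and "a' = a \<Longrightarrow> c < cd k b b'"
    and "a' = sc k a \<or> a' = pc k a \<Longrightarrow> c < cd k b a' + 1 + cd k a b'"
    and "a' = sc k (sc k a) \<Longrightarrow> c < cd k b (sc k a) + 4 + cd k (sc k a) b'"
    and "a' = pc k (pc k a) \<Longrightarrow> c < cd k b (pc k a) + 4 + cd k (pc k a) b'"
  shows "c < TT k a b a' b'"
proof -
  have h0: "c < (if a' = a then cd k b b' else 5)" using assms(1,2) by (cases "a' = a") auto
  have h1: "c < (if a' = sc k a \<or> a' = pc k a then cd k b a' + 1 + cd k a b' else 5)"
    using assms(1,3) by (cases "a' = sc k a \<or> a' = pc k a") auto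
  have h2: "c < (if a' = sc k (sc k a) then cd k b (sc k a) + 4 + cd k (sc k a) b' else 5)"
    using assms(1,4) by (cases "a' = sc k (sc k a)") auto
  have h3: "c < (if a' = pc k (pc k a) then cd k b (pc k a) + 4 + cd k (pc k a) b' else 5)"
    using assms(1,5) by (cases "a' = pc k (pc k a)") auto
  show ?thesis unfolding TT_def min_less_iff_conj using h0 h1 h2 h3 assms(1) by blast
qed

lemma TT_lip:
  assumes k: "4 \<le> k" and lt: "a < k" "b < k" "a1 < k" "b1 < k" "a2 < k" "b2 < k"
    and e: "sierpinski_adj (cycle_adj k) [a1, b1] [a2, b2]"
  shows "TT k a b a2 b2 \<le> TT k a b a1 b1 + 1"
proof -
  have e': "(a1 = a2 \<and> b1 \<noteq> b2 \<and> (b2 = sc k b1 \<or> b2 = pc k b1)) \<or> (a1 \<noteq> a2 \<and> (a2 = sc k a1 \<or> a2 = pc k a1) \<and> b1 = a2 \<and> b2 = a1)"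
    using e unfolding adj2 cycle_adj_iff by auto
  have c0: "TT k a b a2 b2 \<le> cd k b b1 + 1" if "a1 = a"
  proof (cases "a1 = a2 \<and> b1 \<noteq> b2 \<and> (b2 = sc k b1 \<or> b2 = pc k b1)")
    case True
    then have "cd k b1 b2 \<le> 1" using cd_sc[of b1 k] cd_pc[of b1 k] lt by auto
    moreover have "cd k b b2 \<le> cd k b b1 + cd k b1 b2" using cd_tri lt by auto
    moreover have "TT k a b a2 b2 \<le> cd k b b2" using TT_R0 True that by auto
    ultimately show ?thesis by linarith
  next
    case False
    then have h: "(a2 = sc k a1 \<or> a2 = pc k a1) \<and> b1 = a2 \<and> b2 = a1" using e' by auto
    then have "TT k a b a2 b2 \<le> cd k b a2 + 1 + cd k a b2" using TT_R1 that by auto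
    then show ?thesis using h that by (simp add: cd_self)
  qed
  have c1: "TT k a b a2 b2 \<le> cd k b a1 + 1 + cd k a b1 + 1" if a1: "a1 = sc k a \<or> a1 = pc k a"
  proof (cases "a1 = a2 \<and> b1 \<noteq> b2 \<and> (b2 = sc k b1 \<or> b2 = pc k b1)")
    case True
    then have "cd k b1 b2 \<le> 1" using cd_sc[of b1 k] cd_pc[of b1 k] lt by auto
    moreover have "cd k a b2 \<le> cd k a b1 + cd k b1 b2" using cd_tri lt by auto
    moreover have "TT k a b a2 b2 \<le> cd k b a1 + 1 + cd k a b2" using TT_R1 True a1 by auto
    ultimately show ?thesis by linarith
  next
    case False
    then have h: "(a2 = sc k a1 \<or> a2 = pc k a1) \<and> b1 = a2 \<and> b2 = a1" using e' by auto
    show ?thesis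
    proof (cases "a2 = a")
      case True
      then have "TT k a b a2 b2 \<le> cd k b b2" using TT_R0 by auto
      then show ?thesis using h by auto
    next
      case False
      show ?thesis
      proof (cases "a1 = sc k a")
        case True
        then have "a2 = sc k (sc k a)" using h False pc_sc[of a k] lt by auto
        then have "TT k a b a2 b2 \<le> cd k b (sc k a) + 4 + cd k (sc k a) b2" using TT_R2 by auto
        moreover have "cd k a b1 = 2" using h \<open>a2 = sc k (sc k a)\<close> cd_sc2[OF k lt(1)] by auto
        ultimately show ?thesis using True h by (simp add: cd_self)
      next
        case False
        then have a1p: "a1 = pc k a" using a1 by auto
        then have "a2 = pc k (pc k a)" using h \<open>a2 \<noteq> a\<close> sc_pc[of a k] lt by auto
        then have "TT k a b a2 b2 \<le> cd k b (pc k a) + 4 + cd k (pc k a) b2" using TT_R2' by auto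
        moreover have "cd k a b1 = 2" using h \<open>a2 = pc k (pc k a)\<close> cd_pc2[OF k lt(1)] by auto
        ultimately show ?thesis using a1p h by (simp add: cd_self)
      qed
    qed
  qed
  have c5: "TT k a b a2 b2 \<le> 5" by (rule TT_le5)
  show ?thesis
  proof -
    have "TT k a b a1 b1 = min 5 (min (if a1 = a then cd k b b1 else 5)
      (min (if a1 = sc k a \<or> a1 = pc k a then cd k b a1 + 1 + cd k a b1 else 5)
      (min (if a1 = sc k (sc k a) then cd k b (sc k a) + 4 + cd k (sc k a) b1 else 5)
        (if a1 = pc k (pc k a) then cd k b (pc k a) + 4 + cd k (pc k a) b1 else 5))))"
      by (rule TT_def)
    moreover have "TT k a b a2 b2 - 1 \<le> min 5 (min (if a1 = a then cd k b b1 else 5)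
      (min (if a1 = sc k a \<or> a1 = pc k a then cd k b a1 + 1 + cd k a b1 else 5)
      (min (if a1 = sc k (sc k a) then cd k b (sc k a) + 4 + cd k (sc k a) b1 else 5)
        (if a1 = pc k (pc k a) then cd k b (pc k a) + 4 + cd k (pc k a) b1 else 5))))"
      unfolding min.bounded_iff using c0 c1 c5 by auto
    ultimately show ?thesis by linarith
  qed
qed

abbreviation VV where "VV k \<equiv> sierpinski_V k 2"
abbreviation EE where "EE k \<equiv> sierpinski_adj (cycle_adj k)"
definition TU :: "nat \<Rightarrow> nat list \<Rightarrow> nat list \<Rightarrow> nat" where
  "TU k u v = TT k (u!0) (u!1) (v!0) (v!1)"

lemma TU_lip: "4 \<le> k \<Longrightarrow> u \<in> VV k \<Longrightarrow> v \<in> VV k \<Longrightarrow> w \<in> VV k \<Longrightarrow> EE k v w \<Longrightarrow> TU k u w \<le> TU k u v + 1"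
  unfolding V2 TU_def using TT_lip by fastforce

lemma walk_TU:
  assumes k: "4 \<le> k" and w: "walk (VV k) (EE k) p" and u: "hd p = u"
  shows "i < length p \<Longrightarrow> TU k u (p!i) \<le> i"
proof (induction i)
  case 0
  have "p \<noteq> []" using w unfolding walk_def by auto
  then have "p ! 0 = u" using u by (simp add: hd_conv_nth)
  moreover have "u \<in> VV k" using w \<open>p \<noteq> []\<close> u unfolding walk_def by auto
  ultimately show ?case unfolding TU_def V2 using TT_self by auto
next
  case (Suc i)
  have "EE k (p!i) (p!Suc i)" using w Suc.prems unfolding walk_def by auto
  moreover have "set p \<subseteq> VV k" "p \<noteq> []" using w unfolding walk_def by auto
  moreover have "u \<in> VV k" using calculation u by auto
  ultimately have "TU k u (p!Suc i) \<le> TU k u (p!i) + 1"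
    using TU_lip[OF k] Suc.prems by (meson Suc_lessD nth_mem subsetD)
  then show ?case using Suc by auto
qed

lemma gdist_lower:
  assumes k: "4 \<le> k" and c: "c < TU k u v"
  shows "enat c < gdist (VV k) (EE k) u v"
proof -
  have "enat (TU k u v) \<le> gdist (VV k) (EE k) u v"
    unfolding gdist_def
  proof (rule INF_greatest)
    fix p assume "p \<in> {p. walk (VV k) (EE k) p \<and> hd p = u \<and> last p = v}"
    then have p: "walk (VV k) (EE k) p" "hd p = u" "last p = v" by auto
    then have "p \<noteq> []" unfolding walk_def by auto
    then have "last p = p ! (length p - 1)" by (simp add: last_conv_nth)
    then have "TU k u v \<le> length p - 1" using walk_TU[OF k p(1) p(2), of "length p - 1"] p(3) \<open>p \<noteq> []\<close> by auto
    then show "enat (TU k u v) \<le> enat (length p - 1)" by simp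
  qed
  then show ?thesis using c by (meson enat_ord_simps(2) less_le_trans)
qed

lemma gdist_upper:
  assumes "walk V E p" "hd p = u" "last p = v"
  shows "gdist V E u v \<le> enat (length p - 1)"
  unfolding gdist_def by (rule INF_lower) (use assms in auto)



lemma int_mod_self: "0 \<le> y \<Longrightarrow> y < k \<Longrightarrow> (y::int) mod k = y" by simp
lemma int_mod_minus: "0 \<le> y \<Longrightarrow> y < k \<Longrightarrow> ((y::int) - k) mod k = y"
  by (metis add_diff_cancel_right' diff_add_cancel int_mod_self mod_add_self2)
lemma int_mod_plus: "0 \<le> y \<Longrightarrow> y < k \<Longrightarrow> ((y::int) + k) mod k = y" by simp

lemma cd_off:
  assumes "x < k" "y < k"
  shows "\<exists>i::int. \<bar>i\<bar> = int (cd k x y) \<and> int y = (int x + i) mod int k"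
proof (cases "x \<le> y")
  case True
  show ?thesis
  proof (cases "y - x \<le> k - (y - x)")
    case True
    then show ?thesis using \<open>x \<le> y\<close> assms
      by (intro exI[of _ "int y - int x"]) (auto simp: cd_def min_def)
  next
    case False
    have "int y = (int x + (int y - int x - int k)) mod int k" using assms int_mod_minus[of "int y" "int k"] by simp
    then show ?thesis using \<open>x \<le> y\<close> assms False
      by (intro exI[of _ "int y - int x - int k"]) (auto simp: cd_def min_def)
  qed
next
  case False
  show ?thesis
  proof (cases "x - y \<le> k - (x - y)")
    case True
    then show ?thesis using False assms
      by (intro exI[of _ "int y - int x"]) (auto simp: cd_def min_def)
  next
    case F2: False
    have "int y = (int x + (int y - int x + int k)) mod int k" using assms by simp
    then show ?thesis using False assms F2
      by (intro exI[of _ "int y - int x + int k"]) (auto simp: cd_def min_def)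
  qed
qed

lemma sc_off: "x < k \<Longrightarrow> int (sc k x) = (int x + 1) mod int k"
proof (cases "Suc x = k")
  case True
  then have "int k = int x + 1" by auto
  then show ?thesis unfolding sc_def using True by (metis mod_self of_nat_0)
next
  case False
  assume "x < k"
  then have "int x + 1 < int k" using False by auto
  then show ?thesis unfolding sc_def using False by simp
qed
lemma pc_off: "x < k \<Longrightarrow> int (pc k x) = (int x - 1) mod int k"
proof -
  assume h: "x < k"
  show ?thesis
  proof (cases "x = 0")
    case True
    then show ?thesis unfolding pc_def using h int_mod_minus[of "int k - 1" "int k"] by auto
  next
    case False
    then show ?thesis unfolding pc_def using h by (simp add: of_nat_diff)
  qed
qed

lemma off_comp: "int y = (int x + i) mod m \<Longrightarrow> int x = (int a + j) mod m \<Longrightarrow> int y = (int a + (j + i)) mod m"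
  by (metis add.assoc mod_add_left_eq)

lemma off_self: "a < k \<Longrightarrow> int a = (int a + 0) mod int k" by simp

lemma off_eq:
  assumes "a < k" "y < k" "int y = (int a + t) mod int k" "\<bar>t\<bar> < int k"
  shows "y = a \<longleftrightarrow> t = 0"
proof
  assume "y = a"
  then have "(int a + t) mod int k = (int a) mod int k" using assms by simp
  then have "int k dvd t" by (metis add.commute add_diff_cancel_left' mod_eq_dvd_iff)
  then show "t = 0" using assms(4)
    by (metis abs_of_nonneg dvd_abs_iff abs_ge_zero not_less zdvd_imp_le abs_dvd_iff abs_eq_0 order.strict_iff_order)
next
  assume "t = 0"
  then show "y = a" using assms by simp
qed

lemma off_mod4: "4 dvd k \<Longrightarrow> int y = (int x + i) mod int k \<Longrightarrow> int y mod 4 = (int x + i) mod 4"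
  by (metis int_dvd_int_iff mod_mod_cancel of_nat_numeral)
lemma off_mod2: "even k \<Longrightarrow> int y = (int x + i) mod int k \<Longrightarrow> int y mod 2 = (int x + i) mod 2"
  by (metis even_of_nat mod_mod_cancel)

definition pp :: "nat \<Rightarrow> nat" where "pp r = (if r mod 4 = 1 then 2 else if r mod 4 = 3 then 3 else 1)"
definition ppz :: "int \<Rightarrow> int" where "ppz r = (if r mod 4 = 1 then 2 else if r mod 4 = 3 then 3 else 1)"
lemma pp_ppz: "int (pp n) = ppz (int n)"
proof -
  have h: "int n mod 4 = int (n mod 4)" by (simp add: zmod_int)
  have "n mod 4 = 0 \<or> n mod 4 = 1 \<or> n mod 4 = 2 \<or> n mod 4 = 3" by arith
  then show ?thesis unfolding pp_def ppz_def h by auto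
qed
lemma ppz_cong: "x mod 4 = y mod 4 \<Longrightarrow> ppz x = ppz y" unfolding ppz_def by simp

lemma four_cases: "0 \<le> (r::int) \<Longrightarrow> r < 4 \<Longrightarrow> r = 0 \<or> r = 1 \<or> r = 2 \<or> r = 3" by arith
lemma ppz_res: "ppz x = ppz (x mod 4)" unfolding ppz_def by simp

lemma ppz_lemma:
  assumes "ppz x = ppz (x + i)" "i \<noteq> 0" "\<bar>i\<bar> \<le> 4"
  shows "\<bar>i\<bar> > ppz x"
proof -
  define r where "r = x mod 4"
  have r: "r = 0 \<or> r = 1 \<or> r = 2 \<or> r = 3" unfolding r_def by (intro four_cases) auto
  have e1: "ppz x = ppz r" unfolding r_def by (rule ppz_res)
  have e2: "ppz (x + i) = ppz (r + i)" unfolding r_def by (rule ppz_cong) (simp add: mod_add_left_eq)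
  have i: "i = -4 \<or> i = -3 \<or> i = -2 \<or> i = -1 \<or> i = 1 \<or> i = 2 \<or> i = 3 \<or> i = 4" using assms(2,3) by arith
  show ?thesis using assms(1) unfolding e1 e2 using r i by (elim disjE) (simp_all add: ppz_def)
qed



definition fA :: "nat \<Rightarrow> nat \<Rightarrow> nat" where "fA a b = (if odd a \<and> a = b then 4 else pp b)"
definition colA :: "int \<Rightarrow> int \<Rightarrow> int" where "colA r t = (if odd r \<and> t = 0 then 4 else ppz (r + t))"

lemma pp_le3: "pp n \<le> 3" unfolding pp_def by auto
lemma pp_ge1: "pp n \<ge> 1" unfolding pp_def by auto
lemma fA_le4: "fA a b \<le> 4" unfolding fA_def using pp_le3[of b] by auto
lemma fA_ge1: "fA a b \<ge> 1" unfolding fA_def using pp_ge1 by auto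
lemma fA_4: "fA a b = 4 \<longleftrightarrow> odd a \<and> a = b" unfolding fA_def using pp_le3[of b] by auto
lemma fA_not4: "fA a b \<noteq> 4 \<Longrightarrow> fA a b = pp b" unfolding fA_def by auto

lemma odd_mod4: "odd ((x::int) mod 4) \<longleftrightarrow> odd x"
  by (simp add: dvd_mod_iff)

lemma off_shift: "int a' = (int a + s) mod m \<Longrightarrow> int b' = (int a + i) mod m \<Longrightarrow> int b' = (int a' + (i - s)) mod m"
  by (simp add: mod_add_left_eq)

lemma LA:
  assumes k: "4 dvd k" and lt: "a < k" "b < k" and o: "int b = (int a + t) mod int k" "\<bar>t\<bar> < int k"
  shows "int (fA a b) = colA (int a mod 4) t"
proof -
  have e: "b = a \<longleftrightarrow> t = 0" using off_eq[OF lt(1,2) o] .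
  have m: "int b mod 4 = (int a mod 4 + t) mod 4" using off_mod4[OF k o(1)] by (simp add: mod_add_left_eq)
  have p: "int (pp b) = ppz (int a mod 4 + t)" unfolding pp_ppz by (rule ppz_cong) (simp add: m)
  show ?thesis unfolding fA_def colA_def odd_mod4 using e p by auto
qed

lemma FA1:
  assumes r: "r = 0 \<or> r = 1 \<or> r = 2 \<or> r = 3" and s: "s = 1 \<or> s = -1"
    and i: "\<bar>i1\<bar> + \<bar>i2\<bar> \<le> 2"
    and c: "colA r (s + i1) = colA ((r + s) mod 4) (i2 - s)"
  shows "colA r (s + i1) < \<bar>i1\<bar> + 1 + \<bar>i2\<bar>"
proof -
  have i1: "i1 = -2 \<or> i1 = -1 \<or> i1 = 0 \<or> i1 = 1 \<or> i1 = 2" using i by arith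
  have i2: "i2 = -2 \<or> i2 = -1 \<or> i2 = 0 \<or> i2 = 1 \<or> i2 = 2" using i by arith
  from r s i1 i2 show ?thesis using i c
    apply -
    apply (elim disjE)
    apply (simp_all add: colA_def ppz_def)
    done
qed

lemma parity_flip:
  assumes k: "even k" and lt: "a < k" and a': "int a' = (int a + s) mod int k" and s: "s = 1 \<or> s = -1"
  shows "odd a' \<longleftrightarrow> even a"
proof -
  have "int a' mod 2 = (int a + s) mod 2" using off_mod2[OF k a'] .
  then have "odd (int a') \<longleftrightarrow> even (int a)" using s by (elim disjE) presburger+
  then show ?thesis by simp
qed

lemma verA:
  assumes k: "4 dvd k" "4 \<le> k" and lt: "a < k" "b < k" "a' < k" "b' < k"
    and ne: "[a, b] \<noteq> [a', b']" and eq: "fA a b = fA a' b'"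
  shows "fA a b < TT k a b a' b'"
proof (rule TT_gt)
  have ek: "even k" using k(1) by (metis dvd_trans even_numeral)
  show "fA a b < 5" using fA_le4[of a b] by auto
  show "fA a b < cd k b b'" if "a' = a"
  proof -
    have bb: "b \<noteq> b'" using ne that by auto
    have n4: "fA a b \<noteq> 4"
    proof
      assume h4: "fA a b = 4"
      have h4': "fA a b' = 4" using eq that h4 by simp
      have "b' = a" using conjunct2[OF iffD1[OF fA_4 h4']] by simp
      moreover have "b = a" using conjunct2[OF iffD1[OF fA_4 h4]] by simp
      ultimately show False using bb by auto
    qed
    have n4': "fA a b' \<noteq> 4" using n4 eq that by simp
    have c1: "fA a b = pp b" "fA a b' = pp b'" using fA_not4[OF n4] fA_not4[OF n4'] by auto
    obtain i where i: "\<bar>i\<bar> = int (cd k b b')" "int b' = (int b + i) mod int k" using cd_off[OF lt(2) lt(4)] by blast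
    have "i \<noteq> 0" using i(1) cd_pos[OF lt(2) lt(4) bb] by auto
    show ?thesis
    proof (cases "\<bar>i\<bar> \<le> 4")
      case True
      have "ppz (int b) = ppz (int b + i)" using c1 eq that pp_ppz
        by (metis off_mod4[OF k(1) i(2)] ppz_cong)
      then have "\<bar>i\<bar> > ppz (int b)" using ppz_lemma \<open>i \<noteq> 0\<close> True by auto
      then show ?thesis using c1 i(1) pp_ppz[of b] by linarith
    next
      case False
      then show ?thesis using i(1) fA_le4[of a b] by linarith
    qed
  qed
  show "fA a b < cd k b a' + 1 + cd k a b'" if a1: "a' = sc k a \<or> a' = pc k a"
  proof -
    obtain s where s: "s = 1 \<or> s = -1" "int a' = (int a + s) mod int k"
      using a1 sc_off[OF lt(1)] pc_off[OF lt(1)] by (metis diff_conv_add_uminus)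
    have n4: "fA a b \<noteq> 4"
    proof
      assume h4: "fA a b = 4"
      have h4': "fA a' b' = 4" using h4 eq by simp
      have "odd a" using conjunct1[OF iffD1[OF fA_4 h4]] .
      moreover have "odd a'" using conjunct1[OF iffD1[OF fA_4 h4']] .
      ultimately show False using parity_flip[OF ek lt(1) s(2) s(1)] by auto
    qed
    show ?thesis
    proof (rule ccontr)
      assume nt: "\<not> ?thesis"
      then have small: "cd k b a' + cd k a b' \<le> 2" using n4 fA_le4[of a b] by linarith
      obtain i1 where i1: "\<bar>i1\<bar> = int (cd k a' b)" "int b = (int a' + i1) mod int k" using cd_off[OF lt(3) lt(2)] by blast
      obtain i2 where i2: "\<bar>i2\<bar> = int (cd k a b')" "int b' = (int a + i2) mod int k" using cd_off[OF lt(1) lt(4)] by blast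
      have ob: "int b = (int a + (s + i1)) mod int k" using off_comp[OF i1(2) s(2)] .
      have ob': "int b' = (int a' + (i2 - s)) mod int k" using off_shift[OF s(2) i2(2)] .
      have sm: "\<bar>i1\<bar> + \<bar>i2\<bar> \<le> 2" using small i1(1) i2(1) cd_sym[of k a' b] by linarith
      have c1: "int (fA a b) = colA (int a mod 4) (s + i1)"
        using LA[OF k(1) lt(1,2) ob] sm s(1) k(2) by linarith
      have c2: "int (fA a' b') = colA (int a' mod 4) (i2 - s)"
        using LA[OF k(1) lt(3,4) ob'] sm s(1) k(2) by linarith
      have am: "int a' mod 4 = (int a mod 4 + s) mod 4" using off_mod4[OF k(1) s(2)] by (simp add: mod_add_left_eq)
      have r: "int a mod 4 = 0 \<or> int a mod 4 = 1 \<or> int a mod 4 = 2 \<or> int a mod 4 = 3" by (intro four_cases) auto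
      have "colA (int a mod 4) (s + i1) < \<bar>i1\<bar> + 1 + \<bar>i2\<bar>"
        using FA1[OF r s(1) sm] c1 c2 eq am by auto
      then show False using nt c1 i1(1) i2(1) cd_sym[of k a' b] by linarith
    qed
  qed
  show "fA a b < cd k b (sc k a) + 4 + cd k (sc k a) b'" if "a' = sc k (sc k a)"
  proof (cases "fA a b = 4")
    case True
    then have "b = a" using conjunct2[OF iffD1[OF fA_4 True]] by simp
    then have "cd k b (sc k a) \<ge> 1" using cd_pos[OF lt(1) sc_lt[OF lt(1)]] sc_ne[of k a] k(2) lt(1) by auto
    then show ?thesis using True by linarith
  next
    case False
    then show ?thesis using fA_le4[of a b] by linarith
  qed
  show "fA a b < cd k b (pc k a) + 4 + cd k (pc k a) b'" if "a' = pc k (pc k a)"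
  proof (cases "fA a b = 4")
    case True
    then have "b = a" using conjunct2[OF iffD1[OF fA_4 True]] by simp
    then have "cd k b (pc k a) \<ge> 1" using cd_pos[OF lt(1) pc_lt[OF lt(1)]] pc_ne[of k a] k(2) lt(1) by auto
    then show ?thesis using True by linarith
  next
    case False
    then show ?thesis using fA_le4[of a b] by linarith
  qed
qed



definition jj :: "nat \<Rightarrow> nat \<Rightarrow> nat \<Rightarrow> nat" where "jj k a b = (if a \<le> b then b - a else b + k - a)"
definition QQ :: "nat \<Rightarrow> nat \<Rightarrow> nat \<Rightarrow> nat" where
  "QQ k p j = (if p = 0 then (if j + 4 < k then pp j else if j + 4 = k then 4 else if j + 3 = k then 1
      else if j + 2 = k then 2 else 3) else (if j = 0 then 4 else pp (j + 3)))"
definition fB :: "nat \<Rightarrow> nat \<Rightarrow> nat \<Rightarrow> nat" where "fB k a b = QQ k (a mod 2) (jj k a b)"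
definition GG :: "nat \<Rightarrow> int \<Rightarrow> int" where
  "GG p t = (if p = 0 then (if t \<ge> 0 then ppz t else if t = -4 then 4 else if t = -3 then 1
      else if t = -2 then 2 else if t = -1 then 3 else ppz (t + 2))
    else (if t = 0 then 4 else if t > 0 then ppz (t + 3) else ppz (t + 1)))"

lemma pp_le4 [simp]: "pp n \<le> 4" using pp_le3[of n] by simp
lemma QQ_le4: "QQ k p j \<le> 4" unfolding QQ_def by simp
lemma fB_le4: "fB k a b \<le> 4" unfolding fB_def by (rule QQ_le4)

lemma jj_off:
  assumes "a < k" "b < k" "int b = (int a + t) mod int k"
  shows "int (jj k a b) = t mod int k"
proof -
  have "int (jj k a b) = (int b - int a) mod int k"
  proof (cases "a \<le> b")
    case True
    then show ?thesis unfolding jj_def using assms by (simp add: of_nat_diff)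
  next
    case False
    then have "int (jj k a b) = (int b - int a) + int k" unfolding jj_def using assms by (simp add: of_nat_diff)
    moreover have "0 \<le> (int b - int a) + int k" "(int b - int a) + int k < int k" using False assms by auto
    ultimately show ?thesis by (metis int_mod_self mod_add_self2)
  qed
  also have "\<dots> = t mod int k" using assms(3) by (simp add: mod_diff_left_eq)
  finally show ?thesis .
qed

lemma ppz_k2: "k mod 4 = 2 \<Longrightarrow> ppz (t + int k) = ppz (t + 2)"
proof -
  assume k: "k mod 4 = 2"
  have "int k mod 4 = 2" using k by (metis of_nat_mod of_nat_numeral) 
  then have "(t + int k) mod 4 = (t + 2) mod 4" by (metis mod_add_right_eq)
  then show ?thesis by (rule ppz_cong)
qed

lemma QQ_GG:
  assumes k: "k mod 4 = 2" "10 \<le> k" and p: "p = 0 \<or> p = 1"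
    and t: "- int k < t" "t < int k - 4" and j: "int j = (if t \<ge> 0 then t else t + int k)"
  shows "int (QQ k p j) = GG p t"
proof (cases "p = 0")
  case True
  show ?thesis
  proof (cases "t \<ge> 0")
    case True
    then have "int j = t" "j + 4 < k" using j t by auto
    then show ?thesis unfolding QQ_def GG_def using \<open>p = 0\<close> True pp_ppz[of j] by auto
  next
    case False
    then have jt: "int j = t + int k" using j by auto
    show ?thesis
    proof (cases "t \<le> -5")
      case True
      then have "j + 4 < k" using jt by linarith
      moreover have "int (pp j) = ppz (t + 2)" using pp_ppz[of j] jt ppz_k2[OF k(1)] by simp
      ultimately show ?thesis unfolding QQ_def GG_def using \<open>p = 0\<close> True False by auto
    next
      case F2: False
      then have "t = -4 \<or> t = -3 \<or> t = -2 \<or> t = -1" using False by arith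
      then show ?thesis
      proof (elim disjE)
        assume tt: "t = -4"
        then have "j + 4 = k" using jt by linarith
        then show ?thesis unfolding QQ_def GG_def using \<open>p = 0\<close> tt by simp
      next
        assume tt: "t = -3"
        then have "j + 3 = k" using jt by linarith
        then show ?thesis unfolding QQ_def GG_def using \<open>p = 0\<close> tt by simp
      next
        assume tt: "t = -2"
        then have "j + 2 = k" using jt by linarith
        then show ?thesis unfolding QQ_def GG_def using \<open>p = 0\<close> tt by simp
      next
        assume tt: "t = -1"
        then have "j + 1 = k" using jt by linarith
        then show ?thesis unfolding QQ_def GG_def using \<open>p = 0\<close> tt by simp
      qed
    qed
  qed
next
  case False
  then have p1: "p = 1" using p by auto
  show ?thesis
  proof (cases "t = 0")
    case True
    then show ?thesis unfolding QQ_def GG_def using p1 j by auto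
  next
    case False
    show ?thesis
    proof (cases "t > 0")
      case True
      then have "int j = t" "j \<noteq> 0" using j by auto
      moreover have "int (pp (j + 3)) = ppz (t + 3)" using pp_ppz[of "j+3"] \<open>int j = t\<close> by simp
      ultimately show ?thesis unfolding QQ_def GG_def using p1 True by auto
    next
      case F2: False
      then have jt: "int j = t + int k" "j \<noteq> 0" using j False t by auto
      have "int (pp (j + 3)) = ppz (t + 3 + int k)" using pp_ppz[of "j+3"] jt by (simp add: algebra_simps)
      also have "\<dots> = ppz (t + 3 + 2)" using ppz_k2[OF k(1), of "t + 3"] by simp
      also have "\<dots> = ppz (t + 1)" by (rule ppz_cong) presburger
      finally show ?thesis unfolding QQ_def GG_def using p1 F2 False jt by auto
    qed
  qed
qed

lemma LB:
  assumes k: "k mod 4 = 2" "10 \<le> k" and lt: "a < k" "b < k" and o: "int b = (int a + t) mod int k"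
    and t: "- int k < t" "t < int k - 4"
  shows "int (fB k a b) = GG (a mod 2) t"
proof -
  have j: "int (jj k a b) = t mod int k" using jj_off[OF lt o] .
  have "t mod int k = (if t \<ge> 0 then t else t + int k)"
  proof (cases "t \<ge> 0")
    case True then show ?thesis using t by simp
  next
    case False
    have "t mod int k = (t + int k) mod int k" by simp
    also have "\<dots> = t + int k" using False t by (intro int_mod_self) auto
    finally show ?thesis using False by simp
  qed
  then show ?thesis unfolding fB_def using QQ_GG[OF k _ t] j by (metis mod2_eq_if)
qed



lemma GGZ:
  assumes p: "p = 0 \<or> p = 1" and i: "i \<noteq> 0" "\<bar>i\<bar> \<le> 4" and e: "GG p t = GG p (t + i)"
  shows "\<bar>i\<bar> > GG p t"
proof -
  consider (hi) "t \<ge> 5" | (lo) "t \<le> -9" | (mid) "-8 \<le> t \<and> t \<le> 4" by linarith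
  then show ?thesis
  proof cases
    case hi
    then have "t + i \<ge> 1" using i by linarith
    show ?thesis using p
    proof
      assume p0: "p = 0"
      then have "ppz t = ppz (t + i)" using e hi \<open>t + i \<ge> 1\<close> unfolding GG_def by simp
      then show ?thesis using ppz_lemma[OF _ i] p0 hi unfolding GG_def by simp
    next
      assume p1: "p = 1"
      then have "ppz (t + 3) = ppz ((t + 3) + i)" using e hi \<open>t + i \<ge> 1\<close> unfolding GG_def by (simp add: algebra_simps)
      then show ?thesis using ppz_lemma[OF _ i] p1 hi unfolding GG_def by simp
    qed
  next
    case lo
    then have "t + i \<le> -5" using i by linarith
    show ?thesis using p
    proof
      assume p0: "p = 0"
      then have "ppz (t + 2) = ppz ((t + 2) + i)" using e lo \<open>t + i \<le> -5\<close> unfolding GG_def by (simp add: algebra_simps)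
      then show ?thesis using ppz_lemma[OF _ i] p0 lo unfolding GG_def by simp
    next
      assume p1: "p = 1"
      then have "ppz (t + 1) = ppz ((t + 1) + i)" using e lo \<open>t + i \<le> -5\<close> unfolding GG_def by (simp add: algebra_simps)
      then show ?thesis using ppz_lemma[OF _ i] p1 lo unfolding GG_def by simp
    qed
  next
    case mid
    then have tt: "t = -8 \<or> t = -7 \<or> t = -6 \<or> t = -5 \<or> t = -4 \<or> t = -3 \<or> t = -2 \<or> t = -1 \<or> t = 0 \<or> t = 1 \<or> t = 2 \<or> t = 3 \<or> t = 4" by arith
    have ii: "i = -4 \<or> i = -3 \<or> i = -2 \<or> i = -1 \<or> i = 1 \<or> i = 2 \<or> i = 3 \<or> i = 4" using i by arith
    from p tt ii show ?thesis using e
      apply -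
      apply (elim disjE)
      apply (simp_all add: GG_def ppz_def)
      done
  qed
qed

lemma FB1:
  assumes p: "p = 0 \<or> p = 1" and s: "s = 1 \<or> s = -1"
    and i: "\<bar>i1\<bar> + \<bar>i2\<bar> \<le> 3"
    and c: "GG p (s + i1) = GG (1 - p) (i2 - s)"
  shows "GG p (s + i1) < \<bar>i1\<bar> + 1 + \<bar>i2\<bar>"
proof -
  have i1: "i1 = -3 \<or> i1 = -2 \<or> i1 = -1 \<or> i1 = 0 \<or> i1 = 1 \<or> i1 = 2 \<or> i1 = 3" using i by arith
  have i2: "i2 = -3 \<or> i2 = -2 \<or> i2 = -1 \<or> i2 = 0 \<or> i2 = 1 \<or> i2 = 2 \<or> i2 = 3" using i by arith
  from p s i1 i2 show ?thesis using i c
    apply -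
    apply (elim disjE)
    apply (simp_all add: GG_def ppz_def)
    done
qed

lemma FB10:
  assumes p: "p = 0 \<or> p = 1" and t: "-5 \<le> t" "t \<le> 4" and i: "i \<noteq> 0" "\<bar>i\<bar> \<le> 4"
    and c: "QQ 10 p (nat (t mod 10)) = QQ 10 p (nat ((t + i) mod 10))"
  shows "int (QQ 10 p (nat (t mod 10))) < \<bar>i\<bar>"
proof -
  have tt: "t = -5 \<or> t = -4 \<or> t = -3 \<or> t = -2 \<or> t = -1 \<or> t = 0 \<or> t = 1 \<or> t = 2 \<or> t = 3 \<or> t = 4" using t by arith
  have ii: "i = -4 \<or> i = -3 \<or> i = -2 \<or> i = -1 \<or> i = 1 \<or> i = 2 \<or> i = 3 \<or> i = 4" using i by arith
  from p tt ii show ?thesis using c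
    apply -
    apply (elim disjE)
    apply (simp_all add: QQ_def pp_def)
    done
qed



lemma cd_zero: "x < k \<Longrightarrow> y < k \<Longrightarrow> cd k x y = 0 \<Longrightarrow> x = y"
  using cd_pos by fastforce

lemma jj_rep: "a < k \<Longrightarrow> b < k \<Longrightarrow> int b = (int a + int (jj k a b)) mod int k"
proof -
  assume lt: "a < k" "b < k"
  have "int b = (int a + (int b - int a)) mod int k" using lt by simp
  then have "int (jj k a b) = (int b - int a) mod int k" using jj_off[OF lt] by blast
  then show ?thesis using lt by (simp add: mod_add_right_eq)
qed

lemma verB:
  assumes k: "k mod 4 = 2" "10 \<le> k" and lt: "a < k" "b < k" "a' < k" "b' < k"
    and ne: "[a, b] \<noteq> [a', b']" and eq: "fB k a b = fB k a' b'"
  shows "fB k a b < TT k a b a' b'"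
proof (rule TT_gt)
  have ek: "even k" using k(1) by (metis dvd_mod_iff even_numeral mod_mod_trivial odd_one)
  have k4: "4 \<le> k" using k(2) by auto
  have pa: "a mod 2 = 0 \<or> a mod 2 = 1" by auto
  show "fB k a b < 5" using fB_le4[of k a b] by auto
  show "fB k a b < cd k b b'" if "a' = a"
  proof -
    have bb: "b \<noteq> b'" using ne that by auto
    obtain i where i: "\<bar>i\<bar> = int (cd k b b')" "int b' = (int b + i) mod int k" using cd_off[OF lt(2) lt(4)] by blast
    have "i \<noteq> 0" using i(1) cd_pos[OF lt(2) lt(4) bb] by auto
    show ?thesis
    proof (cases "\<bar>i\<bar> \<le> 4")
      case False
      then show ?thesis using i(1) fB_le4[of k a b] by linarith
    next
      case True
      define j where "j = jj k a b"
      define t where "t = (if j \<le> 4 then int j else int j - int k)"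
      have jk: "j < k" unfolding j_def jj_def using lt by auto
      have tm: "t mod int k = int j mod int k" unfolding t_def by auto
      have ob: "int b = (int a + t) mod int k" using jj_rep[OF lt(1,2)] tm unfolding j_def[symmetric]
        by (metis mod_add_right_eq)
      have ob': "int b' = (int a + (t + i)) mod int k" using off_comp[OF i(2) ob] .
      have tr: "- int k + 5 \<le> t" "t \<le> 4" unfolding t_def using jk k(2) by auto
      show ?thesis
      proof (cases "k = 10")
        case True
        have j1: "int (jj k a b) = t mod 10" using jj_off[OF lt(1,2) ob] True by simp
        have j2: "int (jj k a b') = (t + i) mod 10" using jj_off[OF lt(1,4) ob'] True by simp
        have c1: "fB k a b = QQ 10 (a mod 2) (nat (t mod 10))" unfolding fB_def using j1 True
          by (metis nat_int)
        have c2: "fB k a b' = QQ 10 (a mod 2) (nat ((t + i) mod 10))" unfolding fB_def using j2 True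
          by (metis nat_int)
        have "int (QQ 10 (a mod 2) (nat (t mod 10))) < \<bar>i\<bar>"
          using FB10[OF pa _ _ \<open>i \<noteq> 0\<close> \<open>\<bar>i\<bar> \<le> 4\<close>] tr c1 c2 eq that \<open>k = 10\<close> by auto
        then show ?thesis using c1 i(1) by linarith
      next
        case False
        then have k14: "14 \<le> k" using k by presburger
        have c1: "int (fB k a b) = GG (a mod 2) t" using LB[OF k lt(1,2) ob] tr k14 by linarith
        have c2: "int (fB k a b') = GG (a mod 2) (t + i)" using LB[OF k lt(1,4) ob'] tr k14 True by linarith
        have "\<bar>i\<bar> > GG (a mod 2) t" using GGZ[OF _ \<open>i \<noteq> 0\<close> \<open>\<bar>i\<bar> \<le> 4\<close>] pa c1 c2 eq that by (metis of_nat_mod)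
        then show ?thesis using c1 i(1) by linarith
      qed
    qed
  qed
  show "fB k a b < cd k b a' + 1 + cd k a b'" if a1: "a' = sc k a \<or> a' = pc k a"
  proof -
    obtain s where s: "s = 1 \<or> s = -1" "int a' = (int a + s) mod int k"
      using a1 sc_off[OF lt(1)] pc_off[OF lt(1)] by (metis diff_conv_add_uminus)
    have par: "a' mod 2 = 1 - a mod 2" using parity_flip[OF ek lt(1) s(2) s(1)]
      by (metis even_iff_mod_2_eq_zero odd_iff_mod_2_eq_one diff_zero diff_self_eq_0 cancel_comm_monoid_add_class.diff_cancel One_nat_def)
    show ?thesis
    proof (rule ccontr)
      assume nt: "\<not> ?thesis"
      then have small: "cd k b a' + cd k a b' \<le> 3" using fB_le4[of k a b] by linarith
      obtain i1 where i1: "\<bar>i1\<bar> = int (cd k a' b)" "int b = (int a' + i1) mod int k" using cd_off[OF lt(3) lt(2)] by blast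
      obtain i2 where i2: "\<bar>i2\<bar> = int (cd k a b')" "int b' = (int a + i2) mod int k" using cd_off[OF lt(1) lt(4)] by blast
      have ob: "int b = (int a + (s + i1)) mod int k" using off_comp[OF i1(2) s(2)] .
      have ob': "int b' = (int a' + (i2 - s)) mod int k" using off_shift[OF s(2) i2(2)] .
      have sm: "\<bar>i1\<bar> + \<bar>i2\<bar> \<le> 3" using small i1(1) i2(1) cd_sym[of k a' b] by linarith
      have b1: "- int k < s + i1" "s + i1 < int k - 4" using sm s(1) k(2) by arith+
      have b2: "- int k < i2 - s" "i2 - s < int k - 4" using sm s(1) k(2) by arith+
      have c1: "int (fB k a b) = GG (a mod 2) (s + i1)" using LB[OF k lt(1,2) ob b1] .
      have c2: "int (fB k a' b') = GG (1 - a mod 2) (i2 - s)" using LB[OF k lt(3,4) ob' b2] par by simp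
      have "GG (a mod 2) (s + i1) < \<bar>i1\<bar> + 1 + \<bar>i2\<bar>"
        using FB1[OF pa s(1) sm] c1 c2 eq by auto
      then show False using nt c1 i1(1) i2(1) cd_sym[of k a' b] by linarith
    qed
  qed
  show "fB k a b < cd k b (sc k a) + 4 + cd k (sc k a) b'" if "a' = sc k (sc k a)"
  proof (cases "cd k b (sc k a) = 0")
    case True
    then have "b = sc k a" using cd_zero[OF lt(2) sc_lt[OF lt(1)]] by auto
    then have ob: "int b = (int a + 1) mod int k" using sc_off[OF lt(1)] by simp
    have "int (fB k a b) = GG (a mod 2) 1" using LB[OF k lt(1,2) ob] k(2) by simp
    then have "fB k a b \<le> 2" using pa unfolding GG_def ppz_def by auto
    then show ?thesis by linarith
  next
    case False
    then show ?thesis using fB_le4[of k a b] by linarith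
  qed
  show "fB k a b < cd k b (pc k a) + 4 + cd k (pc k a) b'" if "a' = pc k (pc k a)"
  proof (cases "cd k b (pc k a) = 0")
    case True
    then have "b = pc k a" using cd_zero[OF lt(2) pc_lt[OF lt(1)]] by auto
    then have ob: "int b = (int a + (-1)) mod int k" using pc_off[OF lt(1)] by simp
    have "int (fB k a b) = GG (a mod 2) (-1)" using LB[OF k lt(1,2) ob] k(2) by simp
    then have "fB k a b \<le> 3" using pa unfolding GG_def ppz_def by auto
    then show ?thesis by linarith
  next
    case False
    then show ?thesis using fB_le4[of k a b] by linarith
  qed
qed



definition fcol :: "nat \<Rightarrow> nat list \<Rightarrow> nat" where
  "fcol k u = (if k mod 4 = 0 then fA (u!0) (u!1) else fB k (u!0) (u!1))"

lemma pp_ge1': "pp n \<ge> 1" unfolding pp_def by auto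
lemma QQ_ge1: "QQ k p j \<ge> 1" unfolding QQ_def using pp_ge1'[of j] pp_ge1'[of "j+3"] by auto

lemma upper_coloring:
  assumes k: "4 \<le> k" "k mod 4 = 0 \<or> (k mod 4 = 2 \<and> 10 \<le> k)"
  shows "packing_coloring (VV k) (EE k) 4 (fcol k)"
  unfolding packing_coloring_def
proof (intro conjI ballI impI)
  fix v assume "v \<in> VV k"
  show "fcol k v \<in> {1..4}" unfolding fcol_def using fA_le4 fA_ge1 fB_le4 QQ_ge1 unfolding fB_def
    by (auto simp: fB_def)
next
  fix u v assume u: "u \<in> VV k" and v: "v \<in> VV k" and h: "u \<noteq> v \<and> fcol k u = fcol k v"
  obtain a b where ab: "u = [a,b]" "a < k" "b < k" using u unfolding V2 by auto
  obtain a' b' where ab': "v = [a',b']" "a' < k" "b' < k" using v unfolding V2 by auto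
  have "fcol k u < TU k u v"
  proof (cases "k mod 4 = 0")
    case True
    then have "fA a b = fA a' b'" using h ab ab' unfolding fcol_def by auto
    moreover have "4 dvd k" using True by auto
    ultimately have "fA a b < TT k a b a' b'" using verA[OF _ k(1) ab(2,3) ab'(2,3)] h ab ab' by auto
    then show ?thesis using True ab ab' unfolding fcol_def TU_def by auto
  next
    case False
    then have k2: "k mod 4 = 2" "10 \<le> k" using k by auto
    then have "fB k a b = fB k a' b'" using h ab ab' False unfolding fcol_def by auto
    then have "fB k a b < TT k a b a' b'" using verB[OF k2 ab(2,3) ab'(2,3)] h ab ab' by auto
    then show ?thesis using False ab ab' unfolding fcol_def TU_def by auto
  qed
  then show "enat (fcol k u) < gdist (VV k) (EE k) u v" using gdist_lower[OF k(1)] by auto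
qed

lemma walk_single: "x \<in> V \<Longrightarrow> walk V E [x]" unfolding walk_def by auto
lemma walk_cons: "x \<in> V \<Longrightarrow> E x y \<Longrightarrow> walk V E (y # ys) \<Longrightarrow> walk V E (x # y # ys)"
  unfolding walk_def
proof (intro conjI allI impI)
  fix i assume h: "x \<in> V" "E x y" "y # ys \<noteq> [] \<and> set (y # ys) \<subseteq> V \<and> (\<forall>i. Suc i < length (y # ys) \<longrightarrow> E ((y # ys) ! i) ((y # ys) ! Suc i))"
    and i: "Suc i < length (x # y # ys)"
  show "E ((x # y # ys) ! i) ((x # y # ys) ! Suc i)"
  proof (cases i)
    case 0 then show ?thesis using h by simp
  next
    case (Suc j) then show ?thesis using h i by auto
  qed
qed (auto)

lemma conflict:
  assumes pc: "packing_coloring V E c g" and w: "walk V E p" and ne: "hd p \<noteq> last p"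
    and eq: "g (hd p) = g (last p)"
  shows "g (hd p) < length p - 1"
proof -
  have "p \<noteq> []" "set p \<subseteq> V" using w unfolding walk_def by auto
  then have "hd p \<in> V" "last p \<in> V" by auto
  then have "enat (g (hd p)) < gdist V E (hd p) (last p)" using pc ne eq unfolding packing_coloring_def by auto
  also have "\<dots> \<le> enat (length p - 1)" using gdist_upper[OF w] by auto
  finally show ?thesis by simp
qed

lemma edgeU: "a < k \<Longrightarrow> Suc b < k \<Longrightarrow> EE k [a, b] [a, Suc b]"
  unfolding adj2 cycle_adj_iff sc_def by auto
lemma edgeD: "a < k \<Longrightarrow> Suc b < k \<Longrightarrow> EE k [a, Suc b] [a, b]"
  unfolding adj2 cycle_adj_iff pc_def by auto
lemma edgeX: "Suc a < k \<Longrightarrow> EE k [a, Suc a] [Suc a, a]"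
  unfolding adj2 cycle_adj_iff sc_def by auto
lemma edgeX': "Suc a < k \<Longrightarrow> EE k [Suc a, a] [a, Suc a]"
  unfolding adj2 cycle_adj_iff pc_def by auto

lemma lower_bound:
  assumes k: "4 \<le> k" and pc: "packing_coloring (VV k) (EE k) c g" and c: "c \<le> 3"
  shows False
proof -
  have inV: "[a, b] \<in> VV k" if "a \<le> 3" "b \<le> 3" for a b using that k unfolding V2 by auto
  have s0: "sc k 0 = 1" "sc k 1 = 2" "sc k 2 = 3" "pc k 1 = 0" "pc k 2 = 1" "pc k 3 = 2"
    using k unfolding sc_def pc_def by auto
  have k1: "1 < k" "2 < k" "3 < k" using k by auto
  have e1: "EE k [1,0] [1,1]" using edgeU[of 1 k 0] k1 by simp
  have e2: "EE k [1,1] [1,2]" using edgeU[of 1 k 1] k1 by (simp add: numeral_2_eq_2)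
  have e3: "EE k [1,2] [1,3]" using edgeU[of 1 k 2] k1 by (simp add: numeral_3_eq_3)
  have e4: "EE k [1,2] [2,1]" using edgeX[of 1 k] k1 by (simp add: numeral_2_eq_2)
  have e5: "EE k [2,0] [2,1]" using edgeU[of 2 k 0] k1 by simp
  have e6: "EE k [2,1] [2,2]" using edgeU[of 2 k 1] k1 by (simp add: numeral_2_eq_2)
  have e7: "EE k [2,2] [2,3]" using edgeU[of 2 k 2] k1 by (simp add: numeral_3_eq_3)
  have e8: "EE k [1,1] [1,0]" using edgeD[of 1 k 0] k1 by simp
  have e9: "EE k [1,2] [1,1]" using edgeD[of 1 k 1] k1 by (simp add: numeral_2_eq_2)
  have e10: "EE k [1,3] [1,2]" using edgeD[of 1 k 2] k1 by (simp add: numeral_3_eq_3)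
  have e11: "EE k [2,1] [1,2]" using edgeX'[of 1 k] k1 by (simp add: numeral_2_eq_2)
  have e12: "EE k [2,1] [2,0]" using edgeD[of 2 k 0] k1 by simp
  have e13: "EE k [2,2] [2,1]" using edgeD[of 2 k 1] k1 by (simp add: numeral_2_eq_2)
  have e14: "EE k [2,3] [2,2]" using edgeD[of 2 k 2] k1 by (simp add: numeral_3_eq_3)
  note e = e1 e2 e3 e4 e5 e6 e7 e8 e9 e10 e11 e12 e13 e14
  have rng: "1 \<le> g v \<and> g v \<le> 3" if "v \<in> VV k" for v
    using pc that c unfolding packing_coloring_def by fastforce
  have d1: "g u \<noteq> g v" if "walk (VV k) (EE k) [u, v]" "u \<noteq> v" for u v
    using conflict[OF pc that(1)] that(2) rng[of u] that(1) unfolding walk_def by fastforce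
  have d2: "g u = g v \<Longrightarrow> g u = 1" if "walk (VV k) (EE k) [u, w, v]" "u \<noteq> v" for u v w
    using conflict[OF pc that(1)] that(2) rng[of u] that(1) unfolding walk_def by fastforce
  have d3: "g u = g v \<Longrightarrow> g u \<le> 2" if "walk (VV k) (EE k) [u, w, z, v]" "u \<noteq> v" for u v w z
    using conflict[OF pc that(1)] that(2) that(1) unfolding walk_def by fastforce
  have v_x0: "[1,0] \<in> VV k" using inV by simp
  have v_x1: "[1,1] \<in> VV k" using inV by simp
  have v_x2: "[1,2] \<in> VV k" using inV by simp
  have v_x3: "[1,3] \<in> VV k" using inV by simp
  have v_y0: "[2,0] \<in> VV k" using inV by simp
  have v_y1: "[2,1] \<in> VV k" using inV by simp
  have v_y2: "[2,2] \<in> VV k" using inV by simp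
  have v_y3: "[2,3] \<in> VV k" using inV by simp
  have x0x1: "g [1,0] \<noteq> g [1,1]" by (rule d1[OF walk_cons[OF v_x0 e1 walk_single[where E="EE k", OF v_x1]]]) simp
  have x1x2: "g [1,1] \<noteq> g [1,2]" by (rule d1[OF walk_cons[OF v_x1 e2 walk_single[where E="EE k", OF v_x2]]]) simp
  have x2x3: "g [1,2] \<noteq> g [1,3]" by (rule d1[OF walk_cons[OF v_x2 e3 walk_single[where E="EE k", OF v_x3]]]) simp
  have x2y1: "g [1,2] \<noteq> g [2,1]" by (rule d1[OF walk_cons[OF v_x2 e4 walk_single[where E="EE k", OF v_y1]]]) simp
  have y0y1: "g [2,0] \<noteq> g [2,1]" by (rule d1[OF walk_cons[OF v_y0 e5 walk_single[where E="EE k", OF v_y1]]]) simp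
  have y1y2: "g [2,1] \<noteq> g [2,2]" by (rule d1[OF walk_cons[OF v_y1 e6 walk_single[where E="EE k", OF v_y2]]]) simp
  have y2y3: "g [2,2] \<noteq> g [2,3]" by (rule d1[OF walk_cons[OF v_y2 e7 walk_single[where E="EE k", OF v_y3]]]) simp
  have x1x3: "g [1,1] = g [1,3] \<Longrightarrow> g [1,1] = 1" by (rule d2[OF walk_cons[OF v_x1 e2 walk_cons[OF v_x2 e3 walk_single[where E="EE k", OF v_x3]]]]) simp_all
  have x1y1: "g [1,1] = g [2,1] \<Longrightarrow> g [1,1] = 1" by (rule d2[OF walk_cons[OF v_x1 e2 walk_cons[OF v_x2 e4 walk_single[where E="EE k", OF v_y1]]]]) simp_all
  have x3y1: "g [1,3] = g [2,1] \<Longrightarrow> g [1,3] = 1" by (rule d2[OF walk_cons[OF v_x3 e10 walk_cons[OF v_x2 e4 walk_single[where E="EE k", OF v_y1]]]]) simp_all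
  have x2y0: "g [1,2] = g [2,0] \<Longrightarrow> g [1,2] = 1" by (rule d2[OF walk_cons[OF v_x2 e4 walk_cons[OF v_y1 e12 walk_single[where E="EE k", OF v_y0]]]]) simp_all
  have x2y2: "g [1,2] = g [2,2] \<Longrightarrow> g [1,2] = 1" by (rule d2[OF walk_cons[OF v_x2 e4 walk_cons[OF v_y1 e6 walk_single[where E="EE k", OF v_y2]]]]) simp_all
  have y0y2: "g [2,0] = g [2,2] \<Longrightarrow> g [2,0] = 1" by (rule d2[OF walk_cons[OF v_y0 e5 walk_cons[OF v_y1 e6 walk_single[where E="EE k", OF v_y2]]]]) simp_all
  have x0x2: "g [1,0] = g [1,2] \<Longrightarrow> g [1,0] = 1" by (rule d2[OF walk_cons[OF v_x0 e1 walk_cons[OF v_x1 e2 walk_single[where E="EE k", OF v_x2]]]]) simp_all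
  have y1y3: "g [2,1] = g [2,3] \<Longrightarrow> g [2,1] = 1" by (rule d2[OF walk_cons[OF v_y1 e6 walk_cons[OF v_y2 e7 walk_single[where E="EE k", OF v_y3]]]]) simp_all
  have x0y1: "g [1,0] = g [2,1] \<Longrightarrow> g [1,0] \<le> 2" by (rule d3[OF walk_cons[OF v_x0 e1 walk_cons[OF v_x1 e2 walk_cons[OF v_x2 e4 walk_single[where E="EE k", OF v_y1]]]]]) simp_all
  have x2y3: "g [1,2] = g [2,3] \<Longrightarrow> g [1,2] \<le> 2" by (rule d3[OF walk_cons[OF v_x2 e4 walk_cons[OF v_y1 e6 walk_cons[OF v_y2 e7 walk_single[where E="EE k", OF v_y3]]]]]) simp_all
  have r: "1 \<le> g [1,0] \<and> g [1,0] \<le> 3" "1 \<le> g [1,1] \<and> g [1,1] \<le> 3" "1 \<le> g [1,2] \<and> g [1,2] \<le> 3"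
    "1 \<le> g [1,3] \<and> g [1,3] \<le> 3" "1 \<le> g [2,0] \<and> g [2,0] \<le> 3" "1 \<le> g [2,1] \<and> g [2,1] \<le> 3"
    "1 \<le> g [2,2] \<and> g [2,2] \<le> 3" "1 \<le> g [2,3] \<and> g [2,3] \<le> 3"
    using rng inV by auto
  consider "g [1,2] = 1" | "g [2,1] = 1" | "g [1,2] \<noteq> 1 \<and> g [2,1] \<noteq> 1" by blast
  then show False
  proof cases
    case 1
    then show False using x1x2 x2x3 x2y1 x1x3 x1y1 x3y1 r by arith
  next
    case 2
    then show False using x2y1 y0y1 y1y2 x2y0 x2y2 y0y2 r by arith
  next
    case 3
    then have "g [1,2] = 2 \<and> g [2,1] = 3 \<or> g [1,2] = 3 \<and> g [2,1] = 2" using x2y1 r by arith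
    then show False
    proof
      assume h: "g [1,2] = 2 \<and> g [2,1] = 3"
      then have "g [1,1] = 1" using x1x2 x1y1 r by arith
      then show False using h x0x1 x0x2 x0y1 r by arith
    next
      assume h: "g [1,2] = 3 \<and> g [2,1] = 2"
      then have "g [2,2] = 1" using y1y2 x2y2 r by arith
      then show False using h y2y3 y1y3 x2y3 r by arith
    qed
  qed
qed

theorem proposition4:
  fixes k :: nat
  assumes "k \<ge> 3"
    and "(k \<ge> 10 \<and> even k) \<or> k mod 4 = 0"
  shows "packing_chromatic_number (sierpinski_V k 2) (sierpinski_adj (cycle_adj k)) = 4"
proof -
  have k4: "4 \<le> k" using assms by presburger
  have kc: "k mod 4 = 0 \<or> (k mod 4 = 2 \<and> 10 \<le> k)" using assms by presburger
  show ?thesis unfolding packing_chromatic_number_def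
  proof (rule Least_equality)
    show "\<exists>f. packing_coloring (VV k) (EE k) 4 f" using upper_coloring[OF k4 kc] by blast
  next
    fix c assume "\<exists>f. packing_coloring (VV k) (EE k) c f"
    then obtain f where pf: "packing_coloring (VV k) (EE k) c f" by blast
    show "4 \<le> c"
    proof (rule ccontr)
      assume "\<not> 4 \<le> c"
      then have "c \<le> 3" by simp
      then show False using lower_bound[OF k4 pf] by blast
    qed
  qed
qed


end
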